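(* There is a numerical constant $C>0$ with the following property. Let $f$ be holomorphic on $\mathbb{D}$ and $\alpha\in\mathbb{R}$ be such that $\operatorname{Im} f(0)<\alpha$ and $$f(\mathbb{D})\subseteq\{z\in\mathbb{C}\,;\ 0<\operatorname{Re}z<\pi\}\cup\{z\in\mathbb{C}\,;\ \operatorname{Im}z<\alpha\}.$$ Then for every $y\ge\alpha$, $$m\big(\{\xi\in\mathbb{T}\,;\ \operatorname{Im}f^*(\xi)>y\}\big)\le Ce^{\alpha-y}.$$
   Context: $m$ is the normalized Lebesgue measure on $\mathbb{T}=\partial\mathbb{D}$, and $f^*(\xi)=\lim_{r\to1^-}f(r\xi)$ denotes the radial limit of $f$ at $\xi$ (the set in question consists of those $\xi$ where this limit exists and has imaginary part $>y$). *)

theory Defs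
  imports "HOL-Analysis.Analysis"
begin

definition has_radial_limit :: "(complex \<Rightarrow> complex) \<Rightarrow> real \<Rightarrow> complex \<Rightarrow> bool" where
  "has_radial_limit f t L \<longleftrightarrow> ((\<lambda>r::real. f (complex_of_real r * cis t)) \<longlongrightarrow> L) (at_left 1)"

definition radial_sup_set :: "(complex \<Rightarrow> complex) \<Rightarrow> real \<Rightarrow> real set" where
  "radial_sup_set f y = {t \<in> {0..<2*pi}. \<exists>L. has_radial_limit f t L \<and> Im L > y}"

text \<open>Normalized Lebesgue measure m on the unit circle, via t \<mapsto> cis t on [0,2pi).\<close>
definition circle_measure :: "real set \<Rightarrow> real" where
  "circle_measure A = measure lebesgue A / (2*pi)"

end

theory Submission
  imports Defs "HOL-Complex_Analysis.Complex_Analysis" "HOL-Real_Asymp.Real_Asymp"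
begin

lemma W_Re:
  assumes "z \<noteq> of_real R"
  shows "Re ((of_real R + z)/(of_real R - z)) = (R^2 - (cmod z)^2) / (cmod (of_real R - z))^2"
  unfolding cmod_power2 by (simp add: Re_divide power2_eq_square algebra_simps)

lemma W_Im:
  assumes "z \<noteq> of_real R"
  shows "Im ((of_real R + z)/(of_real R - z)) = 2*R*Im z / (cmod (of_real R - z))^2"
  unfolding cmod_power2 by (simp add: Im_divide power2_eq_square algebra_simps)

lemma W_inner:
  assumes R: "R > 0" and z: "cmod z < R"
  shows "0 < Re ((of_real R + z)/(of_real R - z))"
    and "\<bar>Im (Ln ((of_real R + z)/(of_real R - z)))\<bar> \<le> 2*R*cmod z / (R^2 - (cmod z)^2)"
proof -
  have ne: "z \<noteq> of_real R" using z by auto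
  have d: "(cmod (of_real R - z))^2 > 0" using ne by auto
  have s: "(cmod z)^2 < R^2" using z by (simp add: power_strict_mono)
  show re: "0 < Re ((of_real R + z)/(of_real R - z))"
    using W_Re[OF ne] d s by simp
  define w where "w = (of_real R + z)/(of_real R - z)"
  have "Im (Ln w) = arctan (Im w / Re w)"
    using re w_def by (metis Arg_eq_Im_Ln arg_conv_arctan order_less_irrefl zero_complex.simps(1))
  then have "\<bar>Im (Ln w)\<bar> \<le> \<bar>Im w / Re w\<bar>" by (metis abs_arctan_le)
  also have "Im w / Re w = (2*R*Im z / (cmod (of_real R - z))^2) / ((R^2 - (cmod z)^2) / (cmod (of_real R - z))^2)"
    unfolding w_def W_Re[OF ne] W_Im[OF ne] ..
  also have "\<dots> = 2*R*Im z / (R^2 - (cmod z)^2)"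
    using d s by (simp add: divide_divide_eq_left' divide_divide_eq_right)
  also have "\<bar>\<dots>\<bar> \<le> 2*R*cmod z / (R^2 - (cmod z)^2)"
  proof -
    have p: "R^2 - (cmod z)^2 > 0" using s by simp
    have "2*R*\<bar>Im z\<bar> \<le> 2*R*cmod z" using R abs_Im_le_cmod[of z] by simp
    moreover have "\<bar>2*R*Im z / (R^2 - (cmod z)^2)\<bar> = 2*R*\<bar>Im z\<bar> / (R^2 - (cmod z)^2)"
      using p R by (simp add: abs_mult abs_of_pos[OF p])
    ultimately show ?thesis using p by (metis divide_right_mono less_eq_real_def)
  qed
  finally show "\<bar>Im (Ln ((of_real R + z)/(of_real R - z)))\<bar> \<le> 2*R*cmod z / (R^2 - (cmod z)^2)"
    unfolding w_def .
qed

lemma W_lower: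
  assumes R: "R > 0" and z: "Im z < 0"
  shows "Im ((of_real R + z)/(of_real R - z)) < 0"
    and "Im (Ln ((of_real R + z)/(of_real R - z))) < 0"
    and "cmod z > R \<Longrightarrow> Im (Ln ((of_real R + z)/(of_real R - z))) < - pi/2"
proof -
  have ne: "z \<noteq> of_real R" using z by auto
  have d: "(cmod (of_real R - z))^2 > 0" using ne by auto
  define w where "w = (of_real R + z)/(of_real R - z)"
  show im: "Im w < 0" using W_Im[OF ne] d R z unfolding w_def by (simp add: divide_neg_pos mult_pos_neg)
  then have w0: "w \<noteq> 0" by auto
  show "Im (Ln w) < 0"
    using Im_Ln_pos_le[OF w0] im mpi_less_Im_Ln[of w] Im_Ln_le_pi[of w] w0 by linarith
  assume big: "cmod z > R"
  have "(cmod z)^2 > R^2" using big R by (simp add: power_strict_mono)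
  then have "Re w < 0" using W_Re[OF ne] d unfolding w_def by (simp add: divide_neg_pos)
  then have "\<bar>Im (Ln w)\<bar> > pi/2" using Re_Ln_pos_le[OF w0] by linarith
  moreover have "Im (Ln w) < 0"
    using Im_Ln_pos_le[OF w0] im mpi_less_Im_Ln[of w] Im_Ln_le_pi[of w] w0 by linarith
  ultimately show "Im (Ln w) < - pi/2" by linarith
qed

definition Wf :: "real \<Rightarrow> complex \<Rightarrow> complex" where
  "Wf R u = (of_real R + exp(-(\<i>*u))) / (of_real R - exp(-(\<i>*u)))"

definition hf :: "real \<Rightarrow> complex \<Rightarrow> real" where
  "hf R u = - Im (Ln (Wf R u)) / pi"

lemma zeta_norm: "cmod (exp(-(\<i>*u))) = exp (Im u)"
  by (simp add: norm_exp_eq_Re)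

lemma zeta_Im: "Im (exp(-(\<i>*u))) = - exp (Im u) * sin (Re u)"
  by (simp add: Im_exp)

lemma zeta_Im_neg: "0 < Re u \<Longrightarrow> Re u < pi \<Longrightarrow> Im (exp(-(\<i>*u))) < 0"
  unfolding zeta_Im by (simp add: sin_gt_zero)

lemma hf_lower:
  assumes y: "y \<ge> \<alpha> + 1" and u: "Im u < \<alpha>"
  shows "\<bar>hf (exp y) u\<bar> \<le> 2 * exp (\<alpha> - y)"
    and "0 < Re (Wf (exp y) u)"
proof -
  define R where "R = exp y"
  define a where "a = exp \<alpha>"
  define sv where "sv = exp (Im u)"
  have R0: "R > 0" and a0: "a > 0" and s0: "sv > 0" unfolding R_def a_def sv_def by auto
  have sa: "sv < a" unfolding sv_def a_def using u by simp
  have "R \<ge> exp 1 * a" unfolding R_def a_def using y by (simp add: exp_add[symmetric])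
  moreover have "exp (1::real) \<ge> 2" using exp_ge_add_one_self[of 1] by simp
  ultimately have Ra: "R \<ge> 2 * a" using a0 by (meson mult_right_mono order.trans less_imp_le)
  have zn: "cmod (exp(-(\<i>*u))) = sv" unfolding sv_def by (rule zeta_norm)
  have zR: "cmod (exp(-(\<i>*u))) < R" using zn sa Ra a0 by linarith
  show "0 < Re (Wf (exp y) u)" unfolding Wf_def R_def[symmetric] using W_inner(1)[OF R0 zR] .
  have b1: "abs (Im (Ln (Wf R u))) \<le> 2*R* sv / (R^2 - sv^2)"
    using W_inner(2)[OF R0 zR] unfolding Wf_def zn .
  have pos: "R^2 - sv^2 > 0" using zR zn R0 s0 by (simp add: power_strict_mono)
  have "2*R* sv * R \<le> 4 * a * (R^2 - sv^2)"
  proof -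
    have "2*R* sv*R \<le> 2*R*a*R" using sa R0 by (simp add: mult_strict_mono less_imp_le)
    moreover have "2* sv^2 \<le> R^2"
    proof -
      have "sv^2 \<le> a^2" using sa s0 by (simp add: power_mono less_imp_le)
      moreover have "4*a^2 \<le> R^2" using Ra a0
        by (metis mult_2_right power2_eq_square power_mono mult.assoc mult_2 less_imp_le numeral_Bit0 mult_numeral_left_semiring_numeral power_mult_distrib zero_le_numeral zero_le_mult_iff)
      ultimately show ?thesis using zero_le_power2[of a] by linarith
    qed
    then have "2*R*a*R \<le> 4 * a * (R^2 - sv^2)" using a0 by (simp add: power2_eq_square algebra_simps)
    ultimately show ?thesis by linarith
  qed
  then have "2*R* sv / (R^2 - sv^2) \<le> 4 * a / R" using pos R0 by (simp add: field_simps)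
  also have "\<dots> \<le> 2 * pi * (a / R)" using pi_gt3 a0 R0 by (simp add: field_simps)
  finally have "\<bar>Im (Ln (Wf R u))\<bar> / pi \<le> 2 * (a / R)" using b1 pi_gt_zero by (simp add: field_simps)
  moreover have "a / R = exp (\<alpha> - y)" unfolding a_def R_def by (simp add: exp_diff)
  ultimately show "\<bar>hf (exp y) u\<bar> \<le> 2 * exp (\<alpha> - y)" unfolding hf_def R_def by simp
qed

lemma hf_strip:
  assumes "0 < Re u" "Re u < pi"
  shows "0 < hf (exp y) u" and "Im (Wf (exp y) u) < 0"
    and "Im u > y \<Longrightarrow> hf (exp y) u > 1/2"
proof -
  have R0: "exp y > 0" by simp
  have z: "Im (exp(-(\<i>*u))) < 0" using zeta_Im_neg assms by blast
  show "Im (Wf (exp y) u) < 0" unfolding Wf_def by (rule W_lower(1)[OF R0 z])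
  show "0 < hf (exp y) u" unfolding hf_def Wf_def using W_lower(2)[OF R0 z] pi_gt_zero by (simp add: divide_neg_pos)
  assume "Im u > y"
  then have "cmod (exp(-(\<i>*u))) > exp y" unfolding zeta_norm by simp
  from W_lower(3)[OF R0 z this] show "hf (exp y) u > 1/2" unfolding hf_def Wf_def
    using pi_gt_zero by (simp add: field_simps)
qed

lemma mean_value_circle:
  fixes G :: "complex \<Rightarrow> complex"
  assumes hol: "G holomorphic_on ball 0 1" and r: "0 < r" "r < 1"
  shows "((\<lambda>t. G (complex_of_real r * cis t)) has_integral (2*pi) * G 0) {0..2*pi}"
proof -
  have sub: "cball 0 r \<subseteq> ball (0::complex) 1" using r by auto
  have cont: "continuous_on (cball 0 r) G"
    using holomorphic_on_imp_continuous_on[OF holomorphic_on_subset[OF hol sub]] .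
  have hol': "G holomorphic_on ball 0 r"
    using holomorphic_on_subset[OF hol] sub ball_subset_cball by blast
  have "((\<lambda>u. G u/(u-0)) has_contour_integral (2 * of_real pi * \<i> * G 0)) (circlepath 0 r)"
    by (rule Cauchy_integral_circlepath[OF cont hol']) (use r in simp)
  then have "((\<lambda>t. G (0 + r * cis t)/(0 + r * cis t - 0) * r * \<i> * cis t) has_integral (2 * of_real pi * \<i> * G 0)) {0..2*pi}"
    unfolding circlepath_def by (subst (asm) has_contour_integral_part_circlepath_iff) auto
  moreover have "(\<lambda>t. G (0 + r * cis t)/(0 + r * cis t - 0) * r * \<i> * cis t) = (\<lambda>t. \<i> * G (complex_of_real r * cis t))"
    using r by (intro ext) (simp add: field_simps)
  ultimately have "((\<lambda>t. \<i> * G (complex_of_real r * cis t)) has_integral (2 * of_real pi * \<i> * G 0)) {0..2*pi}"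
    by metis
  from has_integral_mult_right[OF this, of "-\<i>"]
  show ?thesis by (simp add: algebra_simps)
qed

lemma markov_lemma:
  fixes \<phi> :: "real \<Rightarrow> real"
  assumes cont: "continuous_on {a..b} \<phi>" and int: "(\<phi> has_integral I) {a..b}"
    and nn: "\<And>t. t \<in> {a..b} \<Longrightarrow> \<phi> t \<ge> 0" and e: "e > 0"
  shows "closed {t\<in>{a..b}. \<phi> t \<ge> e}" and "{t\<in>{a..b}. \<phi> t \<ge> e} \<in> lmeasurable"
    and "e * measure lebesgue {t\<in>{a..b}. \<phi> t \<ge> e} \<le> I"
proof -
  define S where "S = {t\<in>{a..b}. \<phi> t \<ge> e}"
  have "S = {a..b} \<inter> \<phi> -` {e..}" unfolding S_def by auto
  then have cl: "closed S" using continuous_closed_preimage[OF cont] by simp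
  then show "closed {t\<in>{a..b}. \<phi> t \<ge> e}" unfolding S_def .
  have "S \<subseteq> {a..b}" unfolding S_def by auto
  then have cp: "compact S" using cl by (meson compact_Icc compact_imp_bounded bounded_subset compact_eq_bounded_closed)
  then have lm: "S \<in> lmeasurable" by (rule lmeasurable_compact)
  then show "{t\<in>{a..b}. \<phi> t \<ge> e} \<in> lmeasurable" unfolding S_def .
  have "(indicator S has_integral measure lebesgue S) UNIV" using lm lmeasurable_iff_has_integral by blast
  moreover have "(\<lambda>x. if x \<in> {a..b} then indicator S x else 0) = (indicator S :: real \<Rightarrow> real)"
    using \<open>S \<subseteq> {a..b}\<close> by (intro ext) (auto simp: indicator_def subset_iff)
  ultimately have "(indicator S has_integral measure lebesgue S) {a..b}"
    using has_integral_restrict_UNIV[of "{a..b}" "indicator S :: real \<Rightarrow> real"] by simp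
  then have i2: "((\<lambda>x. e * indicator S x) has_integral e * measure lebesgue S) {a..b}"
    by (rule has_integral_mult_right)
  have "e * measure lebesgue S \<le> I"
    by (rule has_integral_le[OF i2 int]) (use nn e in \<open>auto simp: S_def indicator_def\<close>)
  then show "e * measure lebesgue {t\<in>{a..b}. \<phi> t \<ge> e} \<le> I" unfolding S_def .
qed

lemma main_bound:
  fixes f :: "complex \<Rightarrow> complex"
  assumes hol: "f holomorphic_on ball 0 1" and f0: "Im (f 0) < \<alpha>"
    and img: "f ` ball 0 1 \<subseteq> {z. 0 < Re z \<and> Re z < pi} \<union> {z. Im z < \<alpha>}"
    and y: "y \<ge> \<alpha> + 1" and Emeas: "radial_sup_set f y \<in> sets lebesgue"
  shows "measure lebesgue (radial_sup_set f y) \<le> 8*pi*(2*exp(\<alpha>-y))"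
proof -
  define R where "R = exp y"
  define c where "c = 2*exp(\<alpha>-y)"
  define E where "E = radial_sup_set f y"
  have c0: "c \<ge> 0" unfolding c_def by simp
  have R0: "R > 0" unfolding R_def by simp
  have inO: "(0 < Re (f z) \<and> Re (f z) < pi) \<or> Im (f z) < \<alpha>" if "z \<in> ball 0 1" for z
  proof -
    have "f z \<in> f ` ball 0 1" using that by blast
    then show ?thesis using img by blast
  qed
  have nz: "of_real R - exp(-(\<i>*u)) \<noteq> 0" if "(0 < Re u \<and> Re u < pi) \<or> Im u < \<alpha>" for u
  proof
    assume eq: "of_real R - exp(-(\<i>*u)) = 0"
    then have e: "exp(-(\<i>*u)) = of_real R" by simp
    show False using that
    proof
      assume "0 < Re u \<and> Re u < pi"
      then have "Im (exp(-(\<i>*u))) < 0" using zeta_Im_neg by blast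
      then show False using e by simp
    next
      assume "Im u < \<alpha>"
      then have "cmod (exp(-(\<i>*u))) < R" unfolding zeta_norm R_def using y by simp
      then show False using e R0 by simp
    qed
  qed
  have npr: "Wf R u \<notin> \<real>\<^sub>\<le>\<^sub>0" if "(0 < Re u \<and> Re u < pi) \<or> Im u < \<alpha>" for u
    using that
  proof
    assume "0 < Re u \<and> Re u < pi"
    then show ?thesis using hf_strip(2)[of u y] unfolding R_def by (auto simp: complex_nonpos_Reals_iff)
  next
    assume "Im u < \<alpha>"
    then show ?thesis using hf_lower(2)[OF y, of u] unfolding R_def by (auto simp: complex_nonpos_Reals_iff)
  qed
  define G where "G = (\<lambda>z. Ln (Wf R (f z)))"
  have Ghol: "G holomorphic_on ball 0 1"
    unfolding G_def
  proof (rule holomorphic_on_Ln')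
    show "Wf R (f z) \<notin> \<real>\<^sub>\<le>\<^sub>0" if "z \<in> ball 0 1" for z using npr inO that by blast
    show "(\<lambda>z. Wf R (f z)) holomorphic_on ball 0 1"
      unfolding Wf_def using nz inO
      by (intro holomorphic_intros hol) auto
  qed
  have Gcont: "continuous_on (ball 0 1) G" using Ghol holomorphic_on_imp_continuous_on by blast
  define \<phi> where "\<phi> = (\<lambda>r t. hf R (f (of_real r * cis t)) + c)"
  have \<phi>G: "\<phi> r t = - Im (G (of_real r * cis t)) / pi + c" for r t
    unfolding \<phi>_def G_def hf_def by simp
  have hf0: "hf R (f 0) \<le> c" using hf_lower(1)[OF y f0] unfolding R_def c_def by linarith
  have nn: "hf R (f z) + c \<ge> 0" if "z \<in> ball 0 1" for z
    using inO[OF that]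
  proof
    assume "0 < Re (f z) \<and> Re (f z) < pi"
    then show ?thesis using hf_strip(1)[of "f z" y] c0 unfolding R_def by linarith
  next
    assume "Im (f z) < \<alpha>"
    then show ?thesis using hf_lower(1)[OF y, of "f z"] unfolding R_def c_def by linarith
  qed
  have inball: "of_real r * cis t \<in> ball (0::complex) 1" if "0 < r" "r < 1" for r t
    using that by (simp add: norm_mult)
  have int_r: "(\<phi> r has_integral 2*pi*(hf R (f 0) + c)) {0..2*pi}" if r: "0 < r" "r < 1" for r
  proof -
    have "((\<lambda>t. G (of_real r * cis t)) has_integral (2*pi) * G 0) {0..2*pi}"
      by (rule mean_value_circle[OF Ghol r])
    from has_integral_linear[OF this bounded_linear_Im]
    have "((\<lambda>t. Im (G (of_real r * cis t))) has_integral Im ((2*pi) * G 0)) {0..2*pi}"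
      by (simp add: o_def)
    from has_integral_cmult_real[OF this, of "-1/pi"]
    have "((\<lambda>t. - Im (G (of_real r * cis t)) / pi) has_integral 2*pi * hf R (f 0)) {0..2*pi}"
      by (simp add: hf_def G_def)
    from has_integral_add[OF this has_integral_const_real[of c 0 "2*pi"]]
    show ?thesis unfolding \<phi>G[abs_def] by (simp add: algebra_simps)
  qed
  have cont_r: "continuous_on {0..2*pi} (\<phi> r)" if r: "0 < r" "r < 1" for r
  proof -
    have "continuous_on UNIV (\<lambda>t. G (of_real r * cis t))"
      by (rule continuous_on_compose2[OF Gcont]) (use inball r in \<open>auto intro!: continuous_intros\<close>)
    then have "continuous_on UNIV (\<phi> r)" unfolding \<phi>G[abs_def] by (intro continuous_intros) auto
    then show ?thesis by (rule continuous_on_subset) auto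
  qed
  define S where "S = (\<lambda>r. {t\<in>{0..2*pi}. \<phi> r t \<ge> 1/2})"
  have S_closed: "closed (S r)" and S_meas: "S r \<in> lmeasurable"
    and S_bound: "measure lebesgue (S r) \<le> 8*pi*c" if r: "0 < r" "r < 1" for r
  proof -
    have nnr: "\<And>t. t \<in> {0..2*pi} \<Longrightarrow> \<phi> r t \<ge> 0" unfolding \<phi>_def using nn inball r by blast
    note mk = markov_lemma[OF cont_r[OF r] int_r[OF r] nnr, of "1/2"]
    show "closed (S r)" "S r \<in> lmeasurable" using mk unfolding S_def by auto
    have "(1/2) * measure lebesgue (S r) \<le> 2*pi*(hf R (f 0) + c)" using mk unfolding S_def by auto
    also have "\<dots> \<le> 2*pi*(2*c)" using hf0 by simp
    finally show "measure lebesgue (S r) \<le> 8*pi*c" by simp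
  qed
  define rr where "rr = (\<lambda>m::nat. 1 - 1 / (real m + 2))"
  have rr: "0 < rr m" "rr m < 1" for m unfolding rr_def by (auto simp: field_simps)
  have rr_lim: "filterlim rr (at_left 1) sequentially"
  proof (rule tendsto_imp_filterlim_at_left)
    show "(rr \<longlongrightarrow> 1) sequentially" unfolding rr_def by real_asymp
    show "\<forall>\<^sub>F x in sequentially. rr x < 1" using rr by simp
  qed
  define A where "A = (\<lambda>n. \<Inter>m\<in>{n..}. S (rr m))"
  have A_closed: "closed (A n)" for n unfolding A_def using S_closed rr by auto
  have A_sub: "A n \<subseteq> S (rr n)" for n unfolding A_def by auto
  have S_sub: "S r \<subseteq> {0..2*pi}" for r unfolding S_def by auto
  have A_meas: "A n \<in> sets lebesgue" for n
  proof -
    have "compact (A n)" using A_closed A_sub S_sub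
      by (meson compact_Icc compact_imp_bounded bounded_subset compact_eq_bounded_closed order.trans)
    then show ?thesis using lmeasurable_compact by blast
  qed
  have A_inc: "incseq A" unfolding A_def incseq_def by auto
  have E_sub: "E \<subseteq> (\<Union>n. A n)"
  proof
    fix t assume "t \<in> E"
    then obtain L where t: "t \<in> {0..<2*pi}" and lim: "has_radial_limit f t L" and L: "Im L > y"
      unfolding E_def radial_sup_set_def by auto
    have lim': "((\<lambda>r. f (of_real r * cis t)) \<longlongrightarrow> L) (at_left 1)"
      using lim unfolding has_radial_limit_def .
    have ev1: "eventually (\<lambda>r. y < Im (f (of_real r * cis t))) (at_left 1)"
      using order_tendstoD(1)[OF tendsto_Im[OF lim'] L] .
    have ev2: "eventually (\<lambda>r. r \<in> {0<..<1}) (at_left (1::real))"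
      by (rule eventually_at_left_real) simp
    have "eventually (\<lambda>r. \<phi> r t \<ge> 1/2) (at_left 1)"
      using ev1 ev2
    proof eventually_elim
      case (elim r)
      then have zb: "of_real r * cis t \<in> ball 0 1" using inball by auto
      have "Im (f (of_real r * cis t)) \<ge> \<alpha>" using elim y by linarith
      then have "0 < Re (f (of_real r * cis t)) \<and> Re (f (of_real r * cis t)) < pi"
        using inO[OF zb] by linarith
      then have "hf R (f (of_real r * cis t)) > 1/2"
        using hf_strip(3)[of "f (of_real r * cis t)" y] elim unfolding R_def by auto
      then show ?case unfolding \<phi>_def using c0 by linarith
    qed
    from eventually_compose_filterlim[OF this rr_lim]
    obtain n where n: "\<And>m. m \<ge> n \<Longrightarrow> \<phi> (rr m) t \<ge> 1/2"
      unfolding eventually_sequentially by blast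
    have "t \<in> A n" unfolding A_def S_def using n t by auto
    then show "t \<in> (\<Union>n. A n)" by blast
  qed
  have EA_meas: "range (\<lambda>n. E \<inter> A n) \<subseteq> sets lebesgue" using Emeas A_meas unfolding E_def by auto
  have EA_inc: "incseq (\<lambda>n. E \<inter> A n)" using A_inc unfolding incseq_def by auto
  have EA_U: "(\<Union>n. E \<inter> A n) = E" using E_sub by auto
  have E_fin: "E \<in> lmeasurable"
  proof (rule fmeasurableI2[of "{0..2*pi}"])
    show "E \<subseteq> {0..2*pi}" unfolding E_def radial_sup_set_def by auto
  qed (use Emeas E_def in auto)
  have "(\<lambda>n. measure lebesgue (E \<inter> A n)) \<longlonglongrightarrow> measure lebesgue (\<Union>n. E \<inter> A n)"
    by (rule Lim_measure_incseq[OF EA_meas EA_inc]) (use E_fin EA_U in \<open>auto simp: fmeasurable_def\<close>)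
  then have lim: "(\<lambda>n. measure lebesgue (E \<inter> A n)) \<longlonglongrightarrow> measure lebesgue E" using EA_U by simp
  have "measure lebesgue (E \<inter> A n) \<le> 8*pi*c" for n
  proof -
    have "measure lebesgue (E \<inter> A n) \<le> measure lebesgue (S (rr n))"
      by (rule measure_mono_fmeasurable) (use A_sub EA_meas S_meas rr in auto)
    also have "\<dots> \<le> 8*pi*c" using S_bound rr by blast
    finally show ?thesis .
  qed
  then have "measure lebesgue E \<le> 8*pi*c" using lim by (intro LIMSEQ_le_const2) auto
  then show ?thesis unfolding E_def c_def .
qed

lemma closed_lebesgue: "closed (A :: real set) \<Longrightarrow> A \<in> sets lebesgue"
  by (metis borel_closed sets_lborel sets_completionI_sets)

lemma radial_meas:
  fixes f :: "complex \<Rightarrow> complex"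
  assumes cont: "continuous_on (ball 0 1) f"
  shows "radial_sup_set f y \<in> sets lebesgue"
proof -
  define g where "g = (\<lambda>t r. f (of_real r * cis t))"
  define I where "I = (\<lambda>n::nat. {1 - 1/(real n + 2) <..< (1::real)})"
  have I01: "r \<in> I n \<Longrightarrow> 0 < r \<and> r < 1" for r n
  proof -
    assume r: "r \<in> I n"
    have "1/(real n + 2) \<le> 1/2" by (simp add: frac_le)
    moreover have "1 - 1/(real n + 2) < r" "r < 1" using r unfolding I_def by auto
    ultimately show ?thesis by linarith
  qed
  have gcont: "continuous_on UNIV (\<lambda>t. g t r)" if "0 < r" "r < 1" for r
    unfolding g_def
    by (rule continuous_on_compose2[OF cont]) (use that in \<open>auto intro!: continuous_intros simp: norm_mult\<close>)
  define B where "B = (\<lambda>q k n. \<Inter>r\<in>I n. \<Inter>s\<in>I n.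
      {t. dist (g t r) (g t s) \<le> 1 / (real k + 1) \<and> q \<le> Im (g t r)})"
  have B_closed: "closed (B q k n)" for q k n
    unfolding B_def
  proof (intro closed_INT ballI)
    fix r s assume rs: "r \<in> I n" "s \<in> I n"
    have c1: "continuous_on UNIV (\<lambda>t. g t r)" "continuous_on UNIV (\<lambda>t. g t s)"
      using gcont I01 rs by auto
    show "closed {t. dist (g t r) (g t s) \<le> 1 / (real k + 1) \<and> q \<le> Im (g t r)}"
      by (intro closed_Collect_conj closed_Collect_le continuous_intros c1)
  qed
  define E' where "E' = {0..<2*pi} \<inter> (\<Union>q\<in>\<rat> \<inter> {y<..}. \<Inter>k. \<Union>n. B q k n)"
  have ival: "{0..<2*pi} \<in> sets (lebesgue :: real measure)" by simp
  have Bm: "B q k n \<in> sets lebesgue" for q k n using B_closed closed_lebesgue by blast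
  have "(\<Union>n. B q k n) \<in> sets lebesgue" for q k using Bm by (intro sets.countable_UN) auto
  then have "(\<Inter>k. \<Union>n. B q k n) \<in> sets lebesgue" for q by (intro sets.countable_INT) auto
  then have "(\<Union>q\<in>\<rat> \<inter> {y<..}. \<Inter>k. \<Union>n. B q k n) \<in> sets lebesgue"
    by (intro sets.countable_UN'' countable_Int1 countable_rat) auto
  then have "E' \<in> sets lebesgue" unfolding E'_def using ival by (rule sets.Int[rotated])
  moreover have "radial_sup_set f y = E'"
  proof (rule set_eqI, rule iffI)
    fix t assume "t \<in> radial_sup_set f y"
    then obtain L where t: "t \<in> {0..<2*pi}" and lim: "has_radial_limit f t L" and L: "Im L > y"
      unfolding radial_sup_set_def by auto
    have lim': "(g t \<longlongrightarrow> L) (at_left 1)"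
      using lim unfolding has_radial_limit_def g_def .
    obtain q where q: "q \<in> \<rat>" "y < q" "q < Im L" using Rats_dense_in_real[OF L] by blast
    have "\<exists>n. t \<in> B q k n" for k
    proof -
      have e0: "1 / (2 * (real k + 1)) > 0" by simp
      have "eventually (\<lambda>r. dist (g t r) L < 1 / (2 * (real k + 1)) \<and> q < Im (g t r)) (at_left 1)"
        using tendstoD[OF lim' e0] order_tendstoD(1)[OF tendsto_Im[OF lim'] q(3)]
        by (rule eventually_conj)
      then obtain b where b: "b < 1" and bP: "\<And>r. b < r \<Longrightarrow> r < 1 \<Longrightarrow>
          dist (g t r) L < 1 / (2 * (real k + 1)) \<and> q < Im (g t r)"
        by (subst (asm) eventually_at_left[of 0]) auto
      obtain n where n: "inverse (real (Suc n)) < 1 - b" using reals_Archimedean[of "1-b"] b by auto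
      have "1/(real n + 2) \<le> inverse (real (Suc n))" by (simp add: field_simps)
      then have nb: "b \<le> 1 - 1/(real n + 2)" using n by linarith
      have "t \<in> B q k n" unfolding B_def
      proof (intro InterI, clarsimp)
        fix r s assume rs: "r \<in> I n" "s \<in> I n"
        then have r: "b < r" "r < 1" and s: "b < s" "s < 1" using nb unfolding I_def by auto
        have "dist (g t r) (g t s) \<le> dist (g t r) L + dist (g t s) L" by (metis dist_triangle3 dist_commute)
        also have "\<dots> < 1 / (real k + 1)" using bP[OF r] bP[OF s] by (simp add: field_simps)
        finally show "dist (g t r) (g t s) \<le> 1 / (real k + 1) \<and> q \<le> Im (g t r)"
          using bP[OF r] by auto
      qed
      then show ?thesis by blast
    qed
    then have "t \<in> (\<Inter>k. \<Union>n. B q k n)" by simp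
    then show "t \<in> E'" unfolding E'_def using t q by (intro IntI UN_I[of q]) auto
  next
    fix t assume "t \<in> E'"
    then have t: "t \<in> {0..<2*pi}" and "\<exists>q\<in>\<rat> \<inter> {y<..}. \<forall>k. \<exists>n. t \<in> B q k n"
      unfolding E'_def by simp_all
    then obtain q where q: "q \<in> \<rat>" "y < q" and H: "\<forall>k. \<exists>n. t \<in> B q k n"
      by auto
    then obtain N where N: "\<And>k. t \<in> B q k (N k)" by metis
    have BN: "dist (g t r) (g t s) \<le> 1 / (real k + 1) \<and> q \<le> Im (g t r)"
      if "r \<in> I (N k)" "s \<in> I (N k)" for k r s
      using N[of k] that unfolding B_def by blast
    define rr where "rr = (\<lambda>m::nat. 1 - 1 / (real m + 2))"
    have rrI: "rr m \<in> I n" if "m > n" for m n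
      using that unfolding rr_def I_def by (auto simp: field_simps)
    define u where "u = (\<lambda>m. g t (rr m))"
    have "Cauchy u"
    proof (rule metric_CauchyI)
      fix e :: real assume e: "e > 0"
      obtain k where k: "inverse (real (Suc k)) < e" using reals_Archimedean[OF e] by auto
      show "\<exists>M. \<forall>m\<ge>M. \<forall>n\<ge>M. dist (u m) (u n) < e"
      proof (intro exI allI impI)
        fix m n assume "Suc (N k) \<le> m" "Suc (N k) \<le> n"
        then have "rr m \<in> I (N k)" "rr n \<in> I (N k)" by (auto intro!: rrI)
        from BN[OF this] have "dist (u m) (u n) \<le> 1 / (real k + 1)" unfolding u_def by auto
        also have "\<dots> < e" using k by (simp add: field_simps inverse_eq_divide)
        finally show "dist (u m) (u n) < e" .
      qed
    qed
    then obtain L where uL: "u \<longlonglongrightarrow> L" using Cauchy_convergent_iff convergent_def by blast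
    have "q \<le> Im L"
    proof (rule LIMSEQ_le_const[OF tendsto_Im[OF uL]])
      show "\<exists>N'. \<forall>n\<ge>N'. q \<le> Im (u n)"
      proof (rule exI[of _ "Suc (N 0)"], intro allI impI)
        fix n assume "Suc (N 0) \<le> n"
        then have "rr n \<in> I (N 0)" by (intro rrI) auto
        from BN[OF this this] show "q \<le> Im (u n)" unfolding u_def by auto
      qed
    qed
    then have L: "Im L > y" using q by linarith
    have "(g t \<longlongrightarrow> L) (at_left 1)"
    proof (rule tendstoI)
      fix e :: real assume e: "e > 0"
      obtain k where k: "inverse (real (Suc k)) < e/2" using reals_Archimedean[of "e/2"] e by auto
      obtain M where M: "\<And>m. m \<ge> M \<Longrightarrow> dist (u m) L < e/2"
        using tendstoD[OF uL, of "e/2"] e unfolding eventually_sequentially by auto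
      define m where "m = max M (Suc (N k))"
      have um: "dist (u m) L < e/2" using M m_def by auto
      have rm: "rr m \<in> I (N k)" using rrI m_def by auto
      have "eventually (\<lambda>r. r \<in> I (N k)) (at_left (1::real))"
        unfolding I_def by (rule eventually_at_left_real) (simp add: field_simps)
      then show "eventually (\<lambda>r. dist (g t r) L < e) (at_left 1)"
      proof eventually_elim
        case (elim r)
        have "dist (g t r) L \<le> dist (g t r) (u m) + dist (u m) L" by (rule dist_triangle)
        also have "dist (g t r) (u m) \<le> 1 / (real k + 1)" using BN[OF elim rm] unfolding u_def by auto
        also have "1 / (real k + 1) < e/2" using k by (simp add: field_simps inverse_eq_divide)
        finally show ?case using um by linarith
      qed
    qed
    then have "has_radial_limit f t L" unfolding has_radial_limit_def g_def .
    then show "t \<in> radial_sup_set f y" unfolding radial_sup_set_def using t L by blast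
  qed
  ultimately show ?thesis by simp
qed

theorem lemma3p3:
  "\<exists>C::real. C > 0 \<and>
     (\<forall>(f::complex \<Rightarrow> complex) (\<alpha>::real).
        f holomorphic_on ball 0 1 \<longrightarrow>
        Im (f 0) < \<alpha> \<longrightarrow>
        f ` ball 0 1 \<subseteq> {z. 0 < Re z \<and> Re z < pi} \<union> {z. Im z < \<alpha>} \<longrightarrow>
        (\<forall>y::real. y \<ge> \<alpha> \<longrightarrow>
           radial_sup_set f y \<in> sets lebesgue \<and>
           circle_measure (radial_sup_set f y) \<le> C * exp (\<alpha> - y)))"
proof (rule exI[of _ 8], intro conjI allI impI)
  show "(0::real) < 8" by simp
  fix f :: "complex \<Rightarrow> complex" and \<alpha> y :: real
  assume hol: "f holomorphic_on ball 0 1" and f0: "Im (f 0) < \<alpha>"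
    and img: "f ` ball 0 1 \<subseteq> {z. 0 < Re z \<and> Re z < pi} \<union> {z. Im z < \<alpha>}"
    and ya: "y \<ge> \<alpha>"
  show meas: "radial_sup_set f y \<in> sets lebesgue"
    using radial_meas holomorphic_on_imp_continuous_on[OF hol] by blast
  show "circle_measure (radial_sup_set f y) \<le> 8 * exp (\<alpha> - y)"
  proof (cases "y \<ge> \<alpha> + 1")
    case True
    from main_bound[OF hol f0 img True meas]
    show ?thesis unfolding circle_measure_def using pi_gt_zero by (simp add: field_simps)
  next
    case False
    have sub: "radial_sup_set f y \<subseteq> {0..2*pi}" unfolding radial_sup_set_def by auto
    have "measure lebesgue (radial_sup_set f y) \<le> measure lebesgue {0..2*pi}"
      by (rule measure_mono_fmeasurable[OF sub meas]) simp
    then have "circle_measure (radial_sup_set f y) \<le> 1"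
      unfolding circle_measure_def using pi_gt_zero by simp
    moreover have "exp (\<alpha> - y) \<ge> exp (-1)" using False by simp
    moreover have "exp (-1::real) > 1/8"
      using e_less_272 by (simp add: exp_minus field_simps)
    ultimately show ?thesis by linarith
  qed
qed

end
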